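(* Let $G$ be a finite connected graph with a real structure and let $G'$ be a connected component of $G(\mathbb R)$. Then $\deg(K_G|_{G'})=\sum_{v\in V(G')}K_G(v)$ is even, where $K_G=\sum_{v\in V(G)}(\operatorname{val}(v)-2)v$.
   Context: A finite graph $G$ has vertex set $V(G)$, edge set $E(G)$ and incidence function $\psi$ assigning to each edge a set of one or two vertices (loops and multiple edges allowed). $\operatorname{val}(v)$ denotes the valence (degree) of $v$ in $G$: the number of edges incident to $v$, each loop at $v$ counted twice. A real structure on $G$ is a pair of involutions of $V(G)$ and $E(G)$, written $v\mapsto\overline v$, $e\mapsto\overline e$, with $\psi(\overline e)=\overline{\psi(e)}$. A vertex/edge is real if fixed; a real edge is non-isolated if all its ends are real vertices. $G(\mathbb R)$ is the subgraph whose vertices are the real vertices and whose edges are the non-isolated real edges. *)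

theory Defs
  imports Main
begin

definition finite_graph :: "'v set \<Rightarrow> 'e set \<Rightarrow> ('e \<Rightarrow> 'v set) \<Rightarrow> bool" where
  "finite_graph V E psi \<longleftrightarrow> finite V \<and> finite E \<and>
     (\<forall>e\<in>E. psi e \<subseteq> V \<and> (card (psi e) = 1 \<or> card (psi e) = 2))"

definition val :: "'e set \<Rightarrow> ('e \<Rightarrow> 'v set) \<Rightarrow> 'v \<Rightarrow> nat" where
  "val E psi v = (\<Sum>e\<in>E. if psi e = {v} then 2 else if v \<in> psi e then 1 else 0)"

definition adj :: "'v set \<Rightarrow> 'e set \<Rightarrow> ('e \<Rightarrow> 'v set) \<Rightarrow> 'v \<Rightarrow> 'v \<Rightarrow> bool" where
  "adj V E psi u w \<longleftrightarrow> u \<in> V \<and> w \<in> V \<and> (\<exists>e\<in>E. u \<in> psi e \<and> w \<in> psi e)"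

definition connected_graph :: "'v set \<Rightarrow> 'e set \<Rightarrow> ('e \<Rightarrow> 'v set) \<Rightarrow> bool" where
  "connected_graph V E psi \<longleftrightarrow> V \<noteq> {} \<and> (\<forall>u\<in>V. \<forall>w\<in>V. (adj V E psi)\<^sup>*\<^sup>* u w)"

definition real_structure ::
  "'v set \<Rightarrow> 'e set \<Rightarrow> ('e \<Rightarrow> 'v set) \<Rightarrow> ('v \<Rightarrow> 'v) \<Rightarrow> ('e \<Rightarrow> 'e) \<Rightarrow> bool" where
  "real_structure V E psi cv ce \<longleftrightarrow>
     (\<forall>v\<in>V. cv v \<in> V \<and> cv (cv v) = v) \<and>
     (\<forall>e\<in>E. ce e \<in> E \<and> ce (ce e) = e) \<and>
     (\<forall>e\<in>E. psi (ce e) = cv ` psi e)"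

definition real_vertices :: "'v set \<Rightarrow> ('v \<Rightarrow> 'v) \<Rightarrow> 'v set" where
  "real_vertices V cv = {v\<in>V. cv v = v}"

definition real_edges :: "'e set \<Rightarrow> ('e \<Rightarrow> 'v set) \<Rightarrow> ('v \<Rightarrow> 'v) \<Rightarrow> ('e \<Rightarrow> 'e) \<Rightarrow> 'e set" where
  "real_edges E psi cv ce = {e\<in>E. ce e = e \<and> (\<forall>v\<in>psi e. cv v = v)}"

definition is_component :: "'v set \<Rightarrow> 'e set \<Rightarrow> ('e \<Rightarrow> 'v set) \<Rightarrow> 'v set \<Rightarrow> bool" where
  "is_component V E psi C \<longleftrightarrow> (\<exists>v\<in>V. C = {w. (adj V E psi)\<^sup>*\<^sup>* v w})"

definition canonical_div :: "'e set \<Rightarrow> ('e \<Rightarrow> 'v set) \<Rightarrow> 'v \<Rightarrow> int" where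
  "canonical_div E psi v = int (val E psi v) - 2"

end

theory Submission
  imports Defs
begin

lemma inv_even:
  "finite S \<Longrightarrow> (\<forall>x\<in>S. f x \<in> S \<and> f x \<noteq> x \<and> f (f x) = x) \<Longrightarrow> even (card S)"
proof (induction "card S" arbitrary: S rule: less_induct)
  case less
  show ?case
  proof (cases "S = {}")
    case True then show ?thesis by simp
  next
    case False
    then obtain x where x: "x \<in> S" by blast
    let ?S' = "S - {x, f x}"
    have fx: "f x \<in> S" "f x \<noteq> x" using less.prems x by auto
    have c: "card S = card ?S' + 2"
    proof -
      have sub: "{x, f x} \<subseteq> S" using x fx by auto
      have "card {x, f x} = 2" using fx(2) by simp
      moreover have "card {x, f x} \<le> card S" using card_mono[OF less.prems(1) sub] .
      ultimately show ?thesis using card_Diff_subset[OF _ sub] by simp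
    qed
    have cl: "\<forall>y\<in>?S'. f y \<in> ?S' \<and> f y \<noteq> y \<and> f (f y) = y"
      using less.prems x by (metis DiffD1 DiffD2 DiffI insertCI insertE singletonD)
    have "even (card ?S')" using less.hyps[of ?S'] c cl less.prems(1) by simp
    then show ?thesis using c by simp
  qed
qed

theorem proposition2:
  fixes V :: "'v set" and E :: "'e set" and psi :: "'e \<Rightarrow> 'v set"
    and cv :: "'v \<Rightarrow> 'v" and ce :: "'e \<Rightarrow> 'e" and C :: "'v set"
  assumes "finite_graph V E psi"
    and "connected_graph V E psi"
    and "real_structure V E psi cv ce"
    and "is_component (real_vertices V cv) (real_edges E psi cv ce) psi C"
  shows "even (\<Sum>v\<in>C. canonical_div E psi v)"
proof -
  have fV: "finite V" and fE: "finite E"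
    and ps: "\<And>e. e \<in> E \<Longrightarrow> psi e \<subseteq> V \<and> (card (psi e) = 1 \<or> card (psi e) = 2)"
    using assms(1) unfolding finite_graph_def by auto
  have cvV: "\<And>v. v \<in> V \<Longrightarrow> cv v \<in> V \<and> cv (cv v) = v"
    and ceE: "\<And>e. e \<in> E \<Longrightarrow> ce e \<in> E \<and> ce (ce e) = e \<and> psi (ce e) = cv ` psi e"
    using assms(3) unfolding real_structure_def by auto
  let ?RV = "real_vertices V cv" and ?RE = "real_edges E psi cv ce"
  obtain v0 where v0: "v0 \<in> ?RV" and Cdef: "C = {w. (adj ?RV ?RE psi)\<^sup>*\<^sup>* v0 w}"
    using assms(4) unfolding is_component_def by auto
  have Creal: "w \<in> V \<and> cv w = w" if "w \<in> C" for w
  proof -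
    have "(adj ?RV ?RE psi)\<^sup>*\<^sup>* v0 w" using that Cdef by auto
    then have "w \<in> ?RV"
      by (induction rule: rtranclp_induct) (use v0 in \<open>auto simp: adj_def\<close>)
    then show ?thesis by (simp add: real_vertices_def)
  qed
  have CV: "C \<subseteq> V" using Creal by auto
  have fC: "finite C" using CV fV finite_subset by auto
  have Cclosed: "u \<in> C" if "w \<in> C" "e \<in> ?RE" "w \<in> psi e" "u \<in> psi e" for w u e
  proof -
    have eE: "e \<in> E" and allr: "\<forall>x\<in>psi e. cv x = x" using that(2) by (auto simp: real_edges_def)
    have "u \<in> V" using ps[OF eE] that(4) by auto
    then have "u \<in> ?RV" using allr that(4) by (simp add: real_vertices_def)
    moreover have "w \<in> ?RV" using Creal[OF that(1)] by (simp add: real_vertices_def)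
    ultimately have "adj ?RV ?RE psi w u" unfolding adj_def using that by blast
    moreover have "(adj ?RV ?RE psi)\<^sup>*\<^sup>* v0 w" using that(1) Cdef by auto
    ultimately show ?thesis using Cdef by (simp add: rtranclp.rtrancl_into_rtrancl)
  qed
  define f where "f e v = (if psi e = {v} then 2 else if v \<in> psi e then 1 else (0::nat))" for e v
  define g where "g e = (\<Sum>v\<in>C. f e v)" for e
  define S where "S = {e\<in>E. \<exists>a b. psi e = {a,b} \<and> a \<noteq> b \<and> a \<in> C \<and> b \<notin> C}"
  have godd: "odd (g e) \<longleftrightarrow> e \<in> S" if eE: "e \<in> E" for e
  proof -
    from ps[OF eE] have "card (psi e) = 1 \<or> card (psi e) = 2" by auto
    then show ?thesis
    proof
      assume "card (psi e) = 1"
      then obtain a where a: "psi e = {a}" by (auto simp: card_Suc_eq)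
      have "g e = (\<Sum>v\<in>C. if a = v then 2 else 0)" unfolding g_def f_def a by (intro sum.cong) auto
      also have "\<dots> = (if a \<in> C then 2 else 0)" using fC by simp
      finally have "even (g e)" by simp
      moreover have "e \<notin> S" using a unfolding S_def by (auto simp: doubleton_eq_iff)
      ultimately show ?thesis by simp
    next
      assume "card (psi e) = 2"
      then obtain a b where ab: "psi e = {a,b}" "a \<noteq> b" by (auto simp: card_Suc_eq numeral_2_eq_2)
      have "g e = (\<Sum>v\<in>C. if v \<in> {a,b} then 1 else 0)" unfolding g_def f_def ab
        using ab(2) by (intro sum.cong) auto
      also have "\<dots> = card (C \<inter> {a,b})" using sum.inter_restrict[OF fC, of "\<lambda>_. 1::nat" "{a,b}"]
        by simp
      finally have ge: "g e = card (C \<inter> {a,b})" .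
      show ?thesis
      proof (cases "a \<in> C"; cases "b \<in> C")
        assume "a \<in> C" "b \<in> C"
        then have "C \<inter> {a,b} = {a,b}" by auto
        then show ?thesis using ge ab eE unfolding S_def by (auto simp: doubleton_eq_iff)
      next
        assume "a \<in> C" "b \<notin> C"
        then have "C \<inter> {a,b} = {a}" by auto
        then show ?thesis using ge ab eE \<open>a \<in> C\<close> \<open>b \<notin> C\<close> unfolding S_def by auto
      next
        assume "a \<notin> C" "b \<in> C"
        then have "C \<inter> {a,b} = {b}" by auto
        moreover have "psi e = {b,a}" "b \<noteq> a" using ab by auto
        ultimately have "g e = 1" using ge by simp
        moreover have "e \<in> S" unfolding S_def using eE \<open>a \<notin> C\<close> \<open>b \<in> C\<close> \<open>psi e = {b,a}\<close> \<open>b \<noteq> a\<close> by blast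
        ultimately show ?thesis by simp
      next
        assume "a \<notin> C" "b \<notin> C"
        then have "C \<inter> {a,b} = {}" by auto
        then show ?thesis using ge ab eE unfolding S_def by (auto simp: doubleton_eq_iff)
      qed
    qed
  qed
  have Sinv: "\<forall>x\<in>S. ce x \<in> S \<and> ce x \<noteq> x \<and> ce (ce x) = x"
  proof
    fix e assume eS: "e \<in> S"
    then obtain a b where eE: "e \<in> E" and ab: "psi e = {a,b}" "a \<noteq> b" "a \<in> C" "b \<notin> C"
      unfolding S_def by auto
    have bV: "b \<in> V" using ps[OF eE] ab by auto
    have ca: "cv a = a" using Creal ab by auto
    have cbV: "cv b \<in> V" "cv (cv b) = b" using cvV[OF bV] by auto
    have cba: "cv b \<noteq> a" using cbV ca ab(2) by metis
    have cbC: "cv b \<notin> C" using Creal cbV ab(4) by metis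
    have pce: "psi (ce e) = {a, cv b}" using ceE[OF eE] ab ca by simp
    have "ce e \<noteq> e"
    proof
      assume ee: "ce e = e"
      then have "{a, cv b} = {a,b}" using pce ab by simp
      then have "cv b = b" using cba by (auto simp: doubleton_eq_iff)
      then have "e \<in> ?RE" using ee eE ab ca by (auto simp: real_edges_def)
      then show False using Cclosed[of a e b] ab by auto
    qed
    moreover have "ce e \<in> S" using ceE[OF eE] pce cba ab(3) cbC unfolding S_def by blast
    ultimately show "ce e \<in> S \<and> ce e \<noteq> e \<and> ce (ce e) = e" using ceE[OF eE] by auto
  qed
  have fS: "finite S" using fE unfolding S_def by auto
  have evS: "even (card S)" using inv_even[OF fS Sinv] .
  have valsum: "(\<Sum>v\<in>C. val E psi v) = (\<Sum>e\<in>E. g e)"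
    unfolding val_def g_def f_def by (rule sum.swap)
  have "(\<Sum>e\<in>E. g e) mod 2 = (\<Sum>e\<in>E. g e mod 2) mod 2" by (simp add: mod_sum_eq)
  also have "(\<Sum>e\<in>E. g e mod 2) = (\<Sum>e\<in>E. if e \<in> S then 1 else 0)"
    proof (intro sum.cong refl)
    fix e assume "e \<in> E"
    then show "g e mod 2 = (if e \<in> S then 1 else 0)" using godd[of e]
      by (cases "even (g e)") (auto simp: even_iff_mod_2_eq_zero odd_iff_mod_2_eq_one)
  qed
  also have "\<dots> = card S" proof -
    have "E \<inter> S = S" unfolding S_def by auto
    then show ?thesis using sum.inter_restrict[OF fE, of "\<lambda>_. 1::nat" S] by simp
  qed
  finally have "even (\<Sum>e\<in>E. g e)" using evS by (simp add: even_iff_mod_2_eq_zero)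
  then have ev: "even (\<Sum>v\<in>C. val E psi v)" using valsum by simp
  have e1: "(\<Sum>v\<in>C. canonical_div E psi v) = (\<Sum>v\<in>C. int (val E psi v)) - 2 * int (card C)"
    unfolding canonical_div_def by (simp add: sum_subtractf)
  have e2: "(\<Sum>v\<in>C. int (val E psi v)) = int (\<Sum>v\<in>C. val E psi v)" by simp
  have e3: "even (int (\<Sum>v\<in>C. val E psi v))" using ev by (simp only: even_of_nat_iff)
  have "even ((\<Sum>v\<in>C. int (val E psi v)) - 2 * int (card C))"
    using e2 e3 by (metis dvd_diff dvd_triv_left)
  then show ?thesis using e1 by (simp only:)
qed

end
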